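(* Let $\Omega\subseteq\mathbb{C}^n$ be a bounded connected Reinhardt domain which is feasible with respect to an admissible multi-radial weight $\omega$, and let $\Lambda=\Lambda(\Omega,\omega,2)$. Let $u\in\mathcal{D}'(\mathbb{T}^n)$ be such that $(\hat u(\alpha))_{\alpha\in\Lambda}\in\ell^\infty(\Lambda)$. If a function $g$ on $\Omega$ is induced by $u$, then $g$ is analytic on $\Omega$.
   Context: A Reinhardt domain is an open $\Omega\subseteq\mathbb{C}^n$ with $\lambda z:=(\lambda_1z_1,\dots,\lambda_nz_n)\in\Omega$ for $z\in\Omega$, $\lambda\in\mathbb{T}^n$; its Reinhardt shadow is $|\Omega|=\{(|z_1|,\dots,|z_n|):z\in\Omega\}$. A weight $\omega$ is multi-radial if measurable, positive a.e., and $\omega(z)=a(|z_1|,\dots,|z_n|)$; admissible if for each compact $K\subset\Omega$ there is $C_K$ with $\sup_K|f|\le C_K\|f\|_{2,\omega}$ for all $f\in A^2(\Omega,\omega)$ (holomorphic functions in $L^2(\Omega,\omega\,dV)$). $\Lambda(\Omega,\omega,2)=\{\alpha\in\mathbb{Z}^n:z^\alpha\in L^2(\Omega,\omega dV)\}$, and $\|c_\alpha\|:=1/\|z^\alpha\|_{2,\omega}$. $\Omega$ is feasible with respect to $\omega$ if $\sum_{\alpha\in\Lambda}\|c_\alpha\|^2z^\alpha$ defines an analytic function on $\Omega$ which has an analytic extension to $\widetilde\Omega=\{z\bar w:z,w\in\Omega\}$ (entrywise products). $\mathcal{D}'(\mathbb{T}^n)$ denotes periodic distributions (continuous linear functionals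 on $C^\infty(\mathbb{T}^n)$), with Fourier coefficients $\hat u(\alpha)$, $\alpha\in\mathbb{Z}^n$; $\widehat{u*v}=\hat u\hat v$. For $r\in|\Omega|$, $K_r\in\mathcal{D}'(\mathbb{T}^n)$ is the distribution $\sum_{\alpha\in\Lambda}\|c_\alpha\|^2r^\alpha e^{i\alpha\cdot\theta}$ (converging in $\mathcal{D}'$), so $\hat K_r(\alpha)=\|c_\alpha\|^2r^\alpha$ for $\alpha\in\Lambda$ and $0$ otherwise. A function $g$ on $\Omega$ is induced by $u\in\mathcal{D}'(\mathbb{T}^n)$ if for each $r\in|\Omega|$ the function $g_r(e^{i\theta_1},\dots,e^{i\theta_n}):=g(r_1e^{i\theta_1},\dots,r_ne^{i\theta_n})$ is the sum of the Fourier series of $K_r*u$. *)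

theory Defs
  imports "HOL-Analysis.Analysis"
begin

text \<open>Points of C^n are vectors complex^'n (index type 'n finite, n = CARD('n)).
  Multi-indices in Z^n are functions 'n => int.\<close>

definition torus_act :: "complex^'n \<Rightarrow> complex^'n \<Rightarrow> complex^'n" where
  "torus_act l z = (\<chi> i. l$i * z$i)"

text \<open>Reinhardt domain (open, torus invariant); connectedness is assumed separately.\<close>
definition reinhardt :: "(complex^'n) set \<Rightarrow> bool" where
  "reinhardt \<Omega> \<longleftrightarrow> open \<Omega> \<and>
     (\<forall>z\<in>\<Omega>. \<forall>l::complex^'n. (\<forall>i. norm (l$i) = 1) \<longrightarrow> torus_act l z \<in> \<Omega>)"

definition shadow :: "(complex^'n) set \<Rightarrow> (real^'n) set" where
  "shadow \<Omega> = (\<lambda>z. \<chi> i. norm (z$i)) ` \<Omega>"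

definition mono :: "complex^'n \<Rightarrow> ('n \<Rightarrow> int) \<Rightarrow> complex" where
  "mono z \<alpha> = (\<Prod>i\<in>UNIV. (z$i) powi (\<alpha> i))"

definition analytic_several :: "(complex^'n \<Rightarrow> complex) \<Rightarrow> (complex^'n) set \<Rightarrow> bool" where
  "analytic_several f S \<longleftrightarrow>
     (\<forall>z0\<in>S. \<exists>e>0. ball z0 e \<subseteq> S \<and>
        (\<exists>c::('n \<Rightarrow> nat) \<Rightarrow> complex. \<forall>z\<in>ball z0 e.
            ((\<lambda>\<beta>. c \<beta> * (\<Prod>i\<in>UNIV. (z$i - z0$i) ^ (\<beta> i))) has_sum f z) UNIV))"

definition wnorm2sq :: "(complex^'n \<Rightarrow> real) \<Rightarrow> (complex^'n) set \<Rightarrow> (complex^'n \<Rightarrow> complex) \<Rightarrow> ennreal" where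
  "wnorm2sq \<omega> \<Omega> f = (\<integral>\<^sup>+ z\<in>\<Omega>. ennreal (\<omega> z * (norm (f z))\<^sup>2) \<partial>lebesgue)"

definition in_L2w :: "(complex^'n \<Rightarrow> real) \<Rightarrow> (complex^'n) set \<Rightarrow> (complex^'n \<Rightarrow> complex) \<Rightarrow> bool" where
  "in_L2w \<omega> \<Omega> f \<longleftrightarrow> set_borel_measurable lebesgue \<Omega> f \<and> wnorm2sq \<omega> \<Omega> f < \<infinity>"

definition wnorm :: "(complex^'n \<Rightarrow> real) \<Rightarrow> (complex^'n) set \<Rightarrow> (complex^'n \<Rightarrow> complex) \<Rightarrow> real" where
  "wnorm \<omega> \<Omega> f = sqrt (enn2real (wnorm2sq \<omega> \<Omega> f))"

definition A2 :: "(complex^'n) set \<Rightarrow> (complex^'n \<Rightarrow> real) \<Rightarrow> (complex^'n \<Rightarrow> complex) set" where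
  "A2 \<Omega> \<omega> = {f. analytic_several f \<Omega> \<and> in_L2w \<omega> \<Omega> f}"

definition multi_radial_weight :: "(complex^'n) set \<Rightarrow> (complex^'n \<Rightarrow> real) \<Rightarrow> bool" where
  "multi_radial_weight \<Omega> \<omega> \<longleftrightarrow> \<omega> \<in> borel_measurable lebesgue \<and>
     (AE z\<in>\<Omega> in lebesgue. \<omega> z > 0) \<and>
     (\<exists>a::real^'n \<Rightarrow> real. \<forall>z\<in>\<Omega>. \<omega> z = a (\<chi> i. norm (z$i)))"

definition admissible_weight :: "(complex^'n) set \<Rightarrow> (complex^'n \<Rightarrow> real) \<Rightarrow> bool" where
  "admissible_weight \<Omega> \<omega> \<longleftrightarrow>
     (\<forall>K. compact K \<and> K \<subseteq> \<Omega> \<longrightarrow>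
        (\<exists>C. \<forall>f\<in>A2 \<Omega> \<omega>. \<forall>z\<in>K. norm (f z) \<le> C * wnorm \<omega> \<Omega> f))"

definition Lambda :: "(complex^'n) set \<Rightarrow> (complex^'n \<Rightarrow> real) \<Rightarrow> ('n \<Rightarrow> int) set" where
  "Lambda \<Omega> \<omega> = {\<alpha>. in_L2w \<omega> \<Omega> (\<lambda>z. mono z \<alpha>)}"

definition ccoef_sq :: "(complex^'n) set \<Rightarrow> (complex^'n \<Rightarrow> real) \<Rightarrow> ('n \<Rightarrow> int) \<Rightarrow> real" where
  "ccoef_sq \<Omega> \<omega> \<alpha> = 1 / (wnorm \<omega> \<Omega> (\<lambda>z. mono z \<alpha>))\<^sup>2"

definition tilde :: "(complex^'n) set \<Rightarrow> (complex^'n) set" where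
  "tilde \<Omega> = {(\<chi> i. z$i * cnj (w$i)) | z w. z \<in> \<Omega> \<and> w \<in> \<Omega>}"

definition feasible :: "(complex^'n) set \<Rightarrow> (complex^'n \<Rightarrow> real) \<Rightarrow> bool" where
  "feasible \<Omega> \<omega> \<longleftrightarrow>
     (\<exists>F. (\<forall>z\<in>\<Omega>. ((\<lambda>\<alpha>. complex_of_real (ccoef_sq \<Omega> \<omega> \<alpha>) * mono z \<alpha>) has_sum F z) (Lambda \<Omega> \<omega>))
        \<and> analytic_several F \<Omega>
        \<and> (\<exists>G. analytic_several G (tilde \<Omega>) \<and> (\<forall>z\<in>\<Omega> \<inter> tilde \<Omega>. G z = F z)))"

text \<open>A periodic distribution u on T^n is represented by its Fourier coefficient sequence;
  these are exactly the sequences of at most polynomial growth.\<close>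
definition periodic_distribution_coeffs :: "(('n::finite \<Rightarrow> int) \<Rightarrow> complex) \<Rightarrow> bool" where
  "periodic_distribution_coeffs uh \<longleftrightarrow>
     (\<exists>C N. \<forall>\<alpha>. norm (uh \<alpha>) \<le> C * (1 + real_of_int (\<Sum>i\<in>UNIV. \<bar>\<alpha> i\<bar>)) ^ N)"

text \<open>g is induced by u (given by its Fourier coefficients uh): for each r in |Omega|,
  g(r e^{i theta}) is the sum of the Fourier series of K_r * u, whose alpha-th coefficient is
  ||c_alpha||^2 r^alpha uh(alpha) for alpha in Lambda and 0 otherwise.\<close>
definition induced_by :: "(complex^'n) set \<Rightarrow> (complex^'n \<Rightarrow> real) \<Rightarrow> (complex^'n \<Rightarrow> complex)
     \<Rightarrow> (('n \<Rightarrow> int) \<Rightarrow> complex) \<Rightarrow> bool" where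
  "induced_by \<Omega> \<omega> g uh \<longleftrightarrow>
     (\<forall>r\<in>shadow \<Omega>. \<forall>\<theta>::real^'n.
        ((\<lambda>\<alpha>. complex_of_real (ccoef_sq \<Omega> \<omega> \<alpha>) * complex_of_real (\<Prod>i\<in>UNIV. (r$i) powi (\<alpha> i))
              * uh \<alpha> * exp (\<i> * complex_of_real (\<Sum>i\<in>UNIV. real_of_int (\<alpha> i) * \<theta>$i)))
          has_sum g (\<chi> i. complex_of_real (r$i) * exp (\<i> * complex_of_real (\<theta>$i)))) (Lambda \<Omega> \<omega>))"

end

theory Submission
  imports Defs
begin

definition bc :: "int \<Rightarrow> nat \<Rightarrow> nat" where
  "bc m k = (if m \<ge> 0 then nat m choose k else (nat (-m) + k - 1) choose k)"

lemma gchoose_int: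
  "((of_int m :: 'a::field_char_0) gchoose k) = (if m \<ge> 0 then 1 else (-1)^k) * of_nat (bc m k)"
proof (cases "m \<ge> 0")
  case True
  then have "(of_int m :: 'a) = of_nat (nat m)" by simp
  then show ?thesis using True by (simp add: bc_def binomial_gbinomial)
next
  case False
  then have m: "(of_int m :: 'a) = - of_nat (nat (-m))" by simp
  have "(of_nat (nat (-m)) + of_nat k - 1 :: 'a) = of_nat (nat (-m) + k - 1)"
    using False by (simp add: of_nat_diff)
  then show ?thesis using False unfolding m gbinomial_minus by (simp add: bc_def binomial_gbinomial)
qed

lemma bc_abs_sum:
  fixes x :: real assumes "0 \<le> x" "x < 1"
  shows "((\<lambda>k. real (bc m k) * x^k) has_sum (if m \<ge> 0 then (1+x) powi m else (1-x) powi m)) UNIV"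
proof (cases "m \<ge> 0")
  case True
  have "(\<lambda>k. (of_int m gchoose k) * x^k) sums (1 + x) powr (of_int m)"
    using gen_binomial_real[of x "of_int m"] assms by simp
  then have "(\<lambda>k. real (bc m k) * x^k) sums (1+x) powi m"
    using True assms by (simp add: gchoose_int powr_real_of_int')
  then show ?thesis using True assms
    by (intro sums_nonneg_imp_has_sum) auto
next
  case False
  have "(\<lambda>k. (of_int m gchoose k) * (-x)^k) sums (1 + (-x)) powr (of_int m)"
    using gen_binomial_real[of "-x" "of_int m"] assms by simp
  moreover have "(of_int m gchoose k) * (-x)^k = real (bc m k) * x^k" for k
    using False by (simp add: gchoose_int power_minus[of x] mult_ac)
  ultimately have "(\<lambda>k. real (bc m k) * x^k) sums (1-x) powi m"
    using assms by (simp add: powr_real_of_int')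
  then show ?thesis using False assms
    by (intro sums_nonneg_imp_has_sum) auto
qed

definition ecoef :: "complex \<Rightarrow> int \<Rightarrow> nat \<Rightarrow> complex" where
  "ecoef z0 m k = (of_int m gchoose k) * z0 powi (m - int k)"

lemma norm_gchoose_int: "norm ((of_int m :: complex) gchoose k) = real (bc m k)"
  by (simp add: gchoose_int norm_mult norm_power)

lemma coord_sum_nz:
  assumes z0: "z0 \<noteq> 0" and h: "norm h < norm z0"
  shows "((\<lambda>k. ecoef z0 m k * h^k) has_sum (z0+h) powi m) UNIV"
    and "((\<lambda>k. norm (ecoef z0 m k * h^k)) has_sum
          (if m \<ge> 0 then (norm z0 + norm h) powi m else (norm z0 - norm h) powi m)) UNIV"
proof -
  define x where "x = norm h / norm z0"
  have x: "0 \<le> x" "x < 1" using z0 h by (auto simp: x_def divide_less_eq)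
  have nz: "norm z0 > 0" using z0 by simp
  have nterm: "norm (ecoef z0 m k * h^k) = norm z0 powi m * (real (bc m k) * x^k)" for k
  proof -
    have "norm (ecoef z0 m k * h^k) = real (bc m k) * (norm z0 powi (m - int k)) * norm h ^ k"
      by (simp add: ecoef_def norm_mult norm_gchoose_int norm_power_int norm_power)
    also have "\<dots> = real (bc m k) * (norm z0 powi m / norm z0 ^ k) * norm h ^ k"
      using nz by (simp add: power_int_diff)
    also have "\<dots> = norm z0 powi m * (real (bc m k) * x^k)"
      using nz by (simp add: x_def power_divide)
    finally show ?thesis .
  qed
  have hs: "((\<lambda>k. real (bc m k) * x^k) has_sum (if m \<ge> 0 then (1+x) powi m else (1-x) powi m)) UNIV"
    by (rule bc_abs_sum[OF x])
  have vals: "norm z0 powi m * (if m \<ge> 0 then (1+x) powi m else (1-x) powi m)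
     = (if m \<ge> 0 then (norm z0 + norm h) powi m else (norm z0 - norm h) powi m)"
  proof -
    have "norm z0 * (1+x) = norm z0 + norm h" "norm z0 * (1-x) = norm z0 - norm h"
      using nz by (auto simp: x_def field_simps)
    then show ?thesis by (simp flip: power_int_mult_distrib)
  qed
  show "((\<lambda>k. norm (ecoef z0 m k * h^k)) has_sum
          (if m \<ge> 0 then (norm z0 + norm h) powi m else (norm z0 - norm h) powi m)) UNIV"
    unfolding nterm vals[symmetric] by (rule has_sum_cmult_right[OF hs])
  define w where "w = h / z0"
  have nw: "norm w = x" by (simp add: w_def x_def norm_divide)
  have s1: "(\<lambda>k. (of_int m gchoose k) * w^k) sums (1 + w) powr (of_int m)"
    using gen_binomial_complex[of w "of_int m"] nw x by simp
  have "1 + w \<noteq> 0"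
  proof
    assume "1 + w = 0" then have "w = -1" by (simp add: add_eq_0_iff)
    then show False using nw x by simp
  qed
  then have s2: "(\<lambda>k. (of_int m gchoose k) * w^k) sums (1 + w) powi m"
    using s1 by (simp add: complex_powr_of_int)
  have ns: "summable (\<lambda>k. norm ((of_int m gchoose k) * w^k))"
  proof -
    have "(\<lambda>k. real (bc m k) * x^k) summable_on UNIV" using hs by (rule has_sum_imp_summable)
    then have "summable (\<lambda>k. real (bc m k) * x^k)"
      by (subst (asm) summable_on_UNIV_nonneg_real_iff) (use x in auto)
    then show ?thesis by (simp add: norm_mult norm_gchoose_int norm_power nw)
  qed
  have hs2: "((\<lambda>k. (of_int m gchoose k) * w^k) has_sum (1 + w) powi m) UNIV"
    by (rule norm_summable_imp_has_sum[OF ns s2])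
  have eq: "z0 powi m * ((of_int m gchoose k) * w^k) = ecoef z0 m k * h^k" for k
  proof -
    have "z0 powi (m - int k) = z0 powi m / z0^k" using z0 by (simp add: power_int_diff)
    then show ?thesis by (simp add: ecoef_def w_def power_divide mult_ac)
  qed
  have eq2: "z0 powi m * (1 + w) powi m = (z0 + h) powi m"
  proof -
    have "z0 * (1 + w) = z0 + h" using z0 by (simp add: w_def field_simps)
    have "z0 powi m * (1 + w) powi m = (z0 * (1+w)) powi m" by (simp add: power_int_mult_distrib)
    also have "\<dots> = (z0 + h) powi m" using \<open>z0 * (1 + w) = z0 + h\<close> by simp
    finally show ?thesis .
  qed
  show "((\<lambda>k. ecoef z0 m k * h^k) has_sum (z0+h) powi m) UNIV"
    using has_sum_cmult_right[OF hs2, of "z0 powi m"] unfolding eq eq2 .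
qed


lemma coord_sum_z:
  assumes m: "m \<ge> 0"
  shows "((\<lambda>k. ecoef 0 m k * h^k) has_sum h powi m) UNIV"
    and "((\<lambda>k. norm (ecoef 0 m k * h^k)) has_sum norm h powi m) UNIV"
proof -
  have e: "ecoef 0 m k = (if k = nat m then 1 else 0)" for k
  proof (cases "k = nat m")
    case True
    have "(of_int m :: complex) = of_nat (nat m)" using m by simp
    then have "(of_int m :: complex) gchoose k = 1" using True by (simp add: binomial_gbinomial[symmetric])
    moreover have "m - int k = 0" using True m by simp
    ultimately show ?thesis using True by (simp add: ecoef_def)
  next
    case False
    then have "m - int k \<noteq> 0" using m by auto
    then show ?thesis using False by (simp add: ecoef_def)
  qed
  show "((\<lambda>k. ecoef 0 m k * h^k) has_sum h powi m) UNIV"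
    by (rule has_sum_finite_neutralI[of "{nat m}"]) (use m in \<open>simp_all add: e power_int_nonneg_exp\<close>)
  show "((\<lambda>k. norm (ecoef 0 m k * h^k)) has_sum norm h powi m) UNIV"
    by (rule has_sum_finite_neutralI[of "{nat m}"]) (use m in \<open>simp_all add: e power_int_nonneg_exp norm_power\<close>)
qed

lemma abs_summable_prod_PiE':
  fixes f :: "'a \<Rightarrow> 'b \<Rightarrow> 'c :: {banach, real_normed_div_algebra, comm_semiring_1}"
  assumes fin: "finite A" and sum: "\<And>x. x \<in> A \<Longrightarrow> f x abs_summable_on B x"
  shows "(\<lambda>g. \<Prod>x\<in>A. f x (g x)) abs_summable_on PiE A B"
proof -
  define s where \<open>s x = infsum (\<lambda>y. norm (f x y)) (B x)\<close> for x
  have \<open>(\<Sum>p\<in>P. norm (\<Prod>x\<in>A. f x (p x))) \<le> prod s A\<close> 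
    if P: \<open>P \<subseteq> Pi\<^sub>E A B\<close> and [simp]: \<open>finite P\<close> for P
  proof -
    define B' where \<open>B' x = {p x| p. p\<in>P}\<close> for x
    have fin_B'[simp]: \<open>finite (B' x)\<close> for x
      using that by (auto simp: B'_def)
    have [simp]: \<open>finite (Pi\<^sub>E A B')\<close>
      by (simp add: finite_PiE fin)
    have [simp]: \<open>P \<subseteq> Pi\<^sub>E A B'\<close>
      using that by (auto simp: B'_def)
    have B'B: \<open>B' x \<subseteq> B x\<close> if \<open>x \<in> A\<close> for x
      unfolding B'_def using P that 
      by auto
    have s_bound: \<open>(\<Sum>y\<in>B' x. norm (f x y)) \<le> s x\<close> if \<open>x \<in> A\<close> for x
      by (metis B'B fin_B' finite_sum_le_has_sum has_sum_infsum norm_ge_zero s_def sum that)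
    have \<open>(\<Sum>p\<in>P. norm (\<Prod>x\<in>A. f x (p x))) \<le> (\<Sum>p\<in>Pi\<^sub>E A B'. norm (\<Prod>x\<in>A. f x (p x)))\<close>
      by (simp add: sum_mono2)
    also have \<open>\<dots> = (\<Sum>p\<in>Pi\<^sub>E A B'. \<Prod>x\<in>A. norm (f x (p x)))\<close>
      by (simp add: prod_norm)
    also have \<open>\<dots> = (\<Prod>x\<in>A. \<Sum>y\<in>B' x. norm (f x y))\<close>
      by (rule prod_sum_PiE[symmetric]) (use fin in auto)
    also have \<open>\<dots> \<le> (\<Prod>x\<in>A. s x)\<close>
      using s_bound by (simp add: prod_mono sum_nonneg)
    finally show ?thesis .
  qed
  then have "bdd_above (sum (\<lambda>g. norm (\<Prod>x\<in>A. f x (g x))) ` {F. F \<subseteq> Pi\<^sub>E A B \<and> finite F})"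
    by (intro bdd_aboveI) blast
  then show ?thesis
    using nonneg_bdd_above_summable_on
    by (metis (mono_tags, lifting) Collect_cong norm_ge_zero)
qed

lemma has_sum_prod_UNIV:
  fixes f :: "'n::finite \<Rightarrow> nat \<Rightarrow> 'c :: {banach, real_normed_field}"
  assumes hs: "\<And>j. (f j has_sum s j) UNIV" and ab: "\<And>j. f j abs_summable_on UNIV"
  shows "((\<lambda>\<beta>. \<Prod>j\<in>UNIV. f j (\<beta> j)) has_sum (\<Prod>j\<in>UNIV. s j)) UNIV"
proof -
  have U: "PiE (UNIV::'n set) (\<lambda>_. (UNIV :: nat set)) = UNIV" by (simp add: PiE_UNIV_domain)
  have a: "(\<lambda>\<beta>. \<Prod>j\<in>UNIV. f j (\<beta> j)) abs_summable_on PiE UNIV (\<lambda>_. UNIV)"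
    by (rule abs_summable_prod_PiE') (use ab in auto)
  have i: "infsum (\<lambda>\<beta>. \<Prod>j\<in>UNIV. f j (\<beta> j)) (PiE UNIV (\<lambda>_. UNIV)) = (\<Prod>j\<in>UNIV. infsum (f j) UNIV)"
    by (rule infsum_prod_PiE_abs) (use ab in auto)
  have e: "infsum (f j) UNIV = s j" for j using hs[of j] by (rule infsumI)
  have "(\<lambda>\<beta>. \<Prod>j\<in>UNIV. f j (\<beta> j)) summable_on UNIV"
    using abs_summable_summable[OF a] unfolding U .
  then have "((\<lambda>\<beta>. \<Prod>j\<in>UNIV. f j (\<beta> j)) has_sum infsum (\<lambda>\<beta>. \<Prod>j\<in>UNIV. f j (\<beta> j)) UNIV) UNIV"
    by (rule has_sum_infsum)
  also have "infsum (\<lambda>\<beta>. \<Prod>j\<in>UNIV. f j (\<beta> j)) UNIV = (\<Prod>j\<in>UNIV. s j)"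
    using i unfolding U e .
  finally show ?thesis .
qed

lemma reinhardt_mod:
  fixes \<Omega> :: "(complex^'n) set"
  assumes R: "reinhardt \<Omega>" and z: "z \<in> \<Omega>" and w: "\<And>j. norm (w$j) = norm (z$j)"
  shows "w \<in> \<Omega>"
proof -
  define l :: "complex^'n" where "l = (\<chi> j. if z$j = 0 then 1 else w$j / z$j)"
  have l1: "\<forall>j. norm (l$j) = 1"
  proof
    fix j show "norm (l$j) = 1"
      using w[of j] by (cases "z$j = 0") (auto simp: l_def norm_divide)
  qed
  have "torus_act l z = w"
  proof -
    have "l$j * z$j = w$j" for j
      using w[of j] by (cases "z$j = 0") (auto simp: l_def)
    then show ?thesis by (simp add: torus_act_def vec_eq_iff)
  qed
  then show ?thesis using R z l1 unfolding reinhardt_def by metis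
qed

lemma norm_le_sum_cart: "norm (x::complex^'n) \<le> (\<Sum>j\<in>UNIV. norm (x$j))"
  unfolding norm_vec_def by (rule L2_set_le_sum) simp

lemma in_ball_coord:
  fixes w p :: "complex^'n"
  assumes "\<And>j. norm (w$j - p$j) \<le> \<eta>" "real CARD('n) * \<eta> < e"
  shows "w \<in> ball p e"
proof -
  have "dist p w = norm (w - p)" by (simp add: dist_norm norm_minus_commute)
  also have "\<dots> \<le> (\<Sum>j\<in>UNIV. norm ((w - p)$j))" by (rule norm_le_sum_cart)
  also have "\<dots> \<le> (\<Sum>j\<in>(UNIV::'n set). \<eta>)" using assms(1) by (intro sum_mono) simp
  also have "\<dots> = real CARD('n) * \<eta>" by simp
  finally show ?thesis using assms(2) by simp
qed

lemma mono_real: "mono (\<chi> j. complex_of_real (r j)) \<alpha> = of_real (\<Prod>j\<in>UNIV. r j powi \<alpha> j)"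
  by (simp add: mono_def)

lemma ccoef_nonneg: "ccoef_sq \<Omega> \<omega> \<alpha> \<ge> 0"
  by (simp add: ccoef_sq_def)

lemma no_neg_exp:
  fixes \<Omega> :: "(complex^'n) set"
  assumes R: "reinhardt \<Omega>" and fe: "feasible \<Omega> \<omega>" and a: "\<alpha> \<in> Lambda \<Omega> \<omega>"
    and c0: "ccoef_sq \<Omega> \<omega> \<alpha> \<noteq> 0" and z0: "z0 \<in> \<Omega>" and zi: "z0$i = 0"
  shows "\<alpha> i \<ge> 0"
proof (rule ccontr)
  assume neg: "\<not> \<alpha> i \<ge> 0"
  obtain F where Fs: "\<And>z. z\<in>\<Omega> \<Longrightarrow> ((\<lambda>\<alpha>. complex_of_real (ccoef_sq \<Omega> \<omega> \<alpha>) * mono z \<alpha>) has_sum F z) (Lambda \<Omega> \<omega>)"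
    and Fa: "analytic_several F \<Omega>"
    using fe unfolding feasible_def by blast
  define p :: "complex^'n" where "p = (\<chi> j. of_real (norm (z0$j)))"
  have pO: "p \<in> \<Omega>" by (rule reinhardt_mod[OF R z0]) (simp add: p_def)
  have "\<exists>e>0. ball p e \<subseteq> \<Omega> \<and> (\<exists>d::('n \<Rightarrow> nat) \<Rightarrow> complex. \<forall>w\<in>ball p e. ((\<lambda>\<beta>. d \<beta> * (\<Prod>j\<in>UNIV. (w$j - p$j) ^ (\<beta> j))) has_sum F w) UNIV)"
    using Fa pO unfolding analytic_several_def by blast
  then obtain e d where e: "e > 0" and eb: "ball p e \<subseteq> \<Omega>"
    and ds: "\<And>w. w \<in> ball p e \<Longrightarrow> ((\<lambda>\<beta>. d \<beta> * (\<Prod>j\<in>UNIV. (w$j - p$j) ^ (\<beta> j))) has_sum F w) UNIV"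
    by blast
  define \<eta> where "\<eta> = e / (2 * real CARD('n))"
  have eta: "\<eta> > 0" "real CARD('n) * \<eta> < e" using e by (auto simp: \<eta>_def)
  define q :: "complex^'n" where "q = (\<chi> j. p$j + of_real \<eta>)"
  have qb: "q \<in> ball p e" by (rule in_ball_coord[OF _ eta(2)]) (use eta in \<open>simp add: q_def\<close>)
  define tq where "tq = (\<lambda>\<beta>. d \<beta> * (\<Prod>j\<in>UNIV. (complex_of_real \<eta>) ^ (\<beta> j)))"
  have "tq summable_on UNIV"
    using has_sum_imp_summable[OF ds[OF qb]] by (simp add: q_def tq_def)
  then have tqa: "(\<lambda>\<beta>. norm (tq \<beta>)) summable_on UNIV" by (simp add: summable_on_iff_abs_summable_on_complex)
  define Bq where "Bq = infsum (\<lambda>\<beta>. norm (tq \<beta>)) UNIV"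
  have Bq0: "Bq \<ge> 0" unfolding Bq_def by (rule infsum_nonneg) simp
  have bound: "norm (F w) \<le> Bq" if w: "\<And>j. norm (w$j - p$j) \<le> \<eta>" for w
  proof -
    have wb: "w \<in> ball p e" by (rule in_ball_coord[OF w eta(2)])
    define tw where "tw = (\<lambda>\<beta>. d \<beta> * (\<Prod>j\<in>UNIV. (w$j - p$j) ^ (\<beta> j)))"
    have le: "norm (tw \<beta>) \<le> norm (tq \<beta>)" for \<beta>
    proof -
      have "(\<Prod>j\<in>UNIV. norm (w$j - p$j) ^ (\<beta> j)) \<le> (\<Prod>j\<in>UNIV. \<eta> ^ (\<beta> j))"
        by (intro prod_mono conjI power_mono w) simp_all
      then show ?thesis using eta(1)
        by (simp add: tw_def tq_def norm_mult prod_norm[symmetric] norm_power mult_left_mono)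
    qed
    have twa: "(\<lambda>\<beta>. norm (tw \<beta>)) summable_on UNIV"
      by (rule Infinite_Sum.abs_summable_on_comparison_test'[OF tqa]) (simp add: le)
    have "F w = infsum tw UNIV" using ds[OF wb] unfolding tw_def by (simp add: infsumI)
    then have "norm (F w) \<le> infsum (\<lambda>\<beta>. norm (tw \<beta>)) UNIV"
      using norm_infsum_bound[OF twa] by simp
    also have "\<dots> \<le> Bq" unfolding Bq_def by (rule infsum_mono[OF twa tqa le])
    finally show ?thesis .
  qed
  define cc where "cc = ccoef_sq \<Omega> \<omega> \<alpha>"
  have cc: "cc > 0" using c0 ccoef_nonneg[of \<Omega> \<omega> \<alpha>] by (simp add: cc_def)
  define K where "K = (\<Prod>j\<in>UNIV-{i}. (norm (z0$j) + \<eta>) powi \<alpha> j)"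
  have K: "K > 0" unfolding K_def using eta(1) by (intro prod_pos zero_less_power_int add_nonneg_pos) simp_all
  have main: "cc * K / t \<le> Bq" if t: "0 < t" "t \<le> \<eta>" "t \<le> 1" for t
  proof -
    define r where "r = (\<lambda>j. if j = i then t else norm (z0$j) + \<eta>)"
    define w :: "complex^'n" where "w = (\<chi> j. of_real (r j))"
    have wd: "norm (w$j - p$j) \<le> \<eta>" for j
      using t eta(1) zi by (auto simp: w_def p_def r_def)
    have wO: "w \<in> \<Omega>" using eb in_ball_coord[OF wd eta(2)] by blast
    have r0: "r j > 0" for j using t eta(1) by (simp add: r_def add_nonneg_pos)
    have hs: "((\<lambda>\<beta>. complex_of_real (ccoef_sq \<Omega> \<omega> \<beta> * (\<Prod>j\<in>UNIV. r j powi \<beta> j))) has_sum F w) (Lambda \<Omega> \<omega>)"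
      using Fs[OF wO] by (simp add: w_def mono_real)
    have hsr: "((\<lambda>\<beta>. ccoef_sq \<Omega> \<omega> \<beta> * (\<Prod>j\<in>UNIV. r j powi \<beta> j)) has_sum Re (F w)) (Lambda \<Omega> \<omega>)"
      using has_sum_Re[OF hs] by (simp only: Re_complex_of_real)
    have single: "((\<lambda>\<beta>. ccoef_sq \<Omega> \<omega> \<beta> * (\<Prod>j\<in>UNIV. r j powi \<beta> j)) has_sum
        (ccoef_sq \<Omega> \<omega> \<alpha> * (\<Prod>j\<in>UNIV. r j powi \<alpha> j))) {\<alpha>}"
      by (rule has_sum_finiteI) simp_all
    have "ccoef_sq \<Omega> \<omega> \<alpha> * (\<Prod>j\<in>UNIV. r j powi \<alpha> j) \<le> Re (F w)"
    proof (rule has_sum_mono_neutral[OF single hsr])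
      fix x assume "x \<in> Lambda \<Omega> \<omega> - {\<alpha>}"
      show "0 \<le> ccoef_sq \<Omega> \<omega> x * (\<Prod>j\<in>UNIV. r j powi x j)"
        by (intro mult_nonneg_nonneg prod_nonneg ccoef_nonneg) (simp add: less_imp_le r0)
    qed (use a in auto)
    also have "\<dots> \<le> norm (F w)" by (rule complex_Re_le_cmod)
    also have "\<dots> \<le> Bq" using bound[OF wd] .
    finally have le1: "cc * (\<Prod>j\<in>UNIV. r j powi \<alpha> j) \<le> Bq" by (simp add: cc_def)
    have "(\<Prod>j\<in>UNIV. r j powi \<alpha> j) = r i powi \<alpha> i * (\<Prod>j\<in>UNIV-{i}. r j powi \<alpha> j)"
      by (simp add: prod.remove)
    also have "(\<Prod>j\<in>UNIV-{i}. r j powi \<alpha> j) = K"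
      unfolding K_def by (rule prod.cong) (auto simp: r_def)
    finally have pr: "(\<Prod>j\<in>UNIV. r j powi \<alpha> j) = t powi \<alpha> i * K" by (simp add: r_def)
    define n where "n = nat (- \<alpha> i)"
    have n: "n \<ge> 1" "\<alpha> i = - int n" using neg by (auto simp: n_def)
    have "t ^ n \<le> t ^ 1" by (rule power_decreasing) (use n t in auto)
    then have "1 / t \<le> 1 / t ^ n" using t by (intro divide_left_mono) auto
    also have "\<dots> = t powi \<alpha> i" using n by (simp add: power_int_minus field_simps)
    finally have "1 / t \<le> t powi \<alpha> i" .
    then have "cc * K * (1/t) \<le> cc * K * t powi \<alpha> i" using cc K by (intro mult_left_mono) auto
    then show ?thesis using le1 pr by (simp add: mult_ac)
  qed
  define t where "t = min (min \<eta> 1) (cc * K / (Bq + 1))"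
  have t: "0 < t" "t \<le> \<eta>" "t \<le> 1" using eta cc K Bq0 by (auto simp: t_def)
  have "cc * K / t \<ge> cc * K / (cc * K / (Bq + 1))"
    using t cc K Bq0 by (intro divide_left_mono) (auto simp: t_def)
  also have "cc * K / (cc * K / (Bq + 1)) = Bq + 1" using cc K Bq0 by simp
  finally show False using main[OF t] by simp
qed

definition Ecoef :: "complex \<Rightarrow> complex \<Rightarrow> int \<Rightarrow> real" where
  "Ecoef z0 h m = (if z0 = 0 then norm h powi m else if m \<ge> 0 then (norm z0 + norm h) powi m
      else (norm z0 - norm h) powi m)"

lemma coord_sum:
  assumes "z0 \<noteq> 0 \<and> norm h < norm z0 \<or> z0 = 0 \<and> m \<ge> 0"
  shows "((\<lambda>k. ecoef z0 m k * h^k) has_sum (z0+h) powi m) UNIV"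
    and "((\<lambda>k. norm (ecoef z0 m k * h^k)) has_sum Ecoef z0 h m) UNIV"
  using assms coord_sum_nz[of z0 h m] coord_sum_z[of m h] by (auto simp: Ecoef_def)

lemma Ecoef_bound:
  assumes "z0 \<noteq> 0 \<and> norm h \<le> \<delta> \<and> \<delta> < norm z0 \<or> z0 = 0 \<and> m \<ge> 0 \<and> norm h \<le> \<delta>"
  shows "Ecoef z0 h m \<le> (if z0 = 0 then \<delta> else norm z0 + \<delta>) powi m + (if z0 = 0 then \<delta> else norm z0 - \<delta>) powi m"
proof (cases "z0 = 0")
  case True
  then have "norm h powi m \<le> \<delta> powi m" using assms by (intro power_int_mono) auto
  moreover have "0 \<le> \<delta>" using assms True norm_ge_zero[of h] by linarith
  ultimately have "0 \<le> \<delta> powi m" "norm h powi m \<le> \<delta> powi m" by simp_all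
  then have "norm h powi m \<le> \<delta> powi m + \<delta> powi m" by linarith
  then show ?thesis using True by (simp add: Ecoef_def)
next
  case False
  then have a: "norm h \<le> \<delta>" "\<delta> < norm z0" using assms by auto
  have d0: "0 \<le> \<delta>" using a(1) norm_ge_zero[of h] by linarith
  have p1: "0 \<le> (norm z0 + \<delta>) powi m" "0 \<le> (norm z0 - \<delta>) powi m" using a d0 by simp_all
  show ?thesis
  proof (cases "m \<ge> 0")
    case True
    then have "(norm z0 + norm h) powi m \<le> (norm z0 + \<delta>) powi m" using a by (intro power_int_mono) auto
    then show ?thesis using False True p1 by (simp add: Ecoef_def)
  next
    case neg: False
    then have "(norm z0 - norm h) powi m \<le> (norm z0 - \<delta>) powi m" using a by (intro power_int_antimono) auto
    then show ?thesis using False neg p1 by (simp add: Ecoef_def)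
  qed
qed

lemma Ecoef_nonneg: "Ecoef z0 h m \<ge> 0 \<or> \<not> (z0 \<noteq> 0 \<and> norm h < norm z0 \<or> z0 = 0)"
  by (auto simp: Ecoef_def)

lemma summable_on_sum_finite:
  fixes f :: "'i \<Rightarrow> 'a \<Rightarrow> 'b::{topological_comm_monoid_add}"
  assumes "finite I" "\<And>i. i \<in> I \<Longrightarrow> f i summable_on A"
  shows "(\<lambda>x. \<Sum>i\<in>I. f i x) summable_on A"
  using assms by (induction I rule: finite_induct) (auto intro: summable_on_add)

lemma polar_vec:
  fixes z :: "complex^'n"
  shows "(\<chi> i. complex_of_real ((\<chi> i. norm (z$i))$i) * exp (\<i> * complex_of_real ((\<chi> i. Arg (z$i))$i))) = z"
proof -
  have "complex_of_real (norm c) * exp (\<i> * complex_of_real (Arg c)) = c" for c :: complex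
    by (cases "c = 0") (use Arg_eq[of c] in auto)
  then show ?thesis by (simp add: vec_eq_iff)
qed

lemma term_eq:
  fixes z :: "complex^'n"
  shows "complex_of_real cc * complex_of_real (\<Prod>i\<in>UNIV. ((\<chi> i. norm (z$i))$i) powi (\<alpha> i)) * u
          * exp (\<i> * complex_of_real (\<Sum>i\<in>UNIV. real_of_int (\<alpha> i) * (\<chi> i. Arg (z$i))$i))
        = complex_of_real cc * u * mono z \<alpha>"
proof -
  have e1: "exp (\<i> * complex_of_real (\<Sum>i\<in>UNIV. real_of_int (\<alpha> i) * Arg (z$i)))
      = (\<Prod>i\<in>UNIV. exp (\<i> * complex_of_real (Arg (z$i))) powi (\<alpha> i))"
  proof -
    have "\<i> * complex_of_real (\<Sum>i\<in>UNIV. real_of_int (\<alpha> i) * Arg (z$i))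
        = (\<Sum>i\<in>UNIV. of_int (\<alpha> i) * (\<i> * complex_of_real (Arg (z$i))))"
      by (simp add: sum_distrib_left mult_ac)
    then show ?thesis by (simp add: exp_sum exp_power_int)
  qed
  have "mono z \<alpha> = (\<Prod>i\<in>UNIV. (complex_of_real (norm (z$i)) * exp (\<i> * complex_of_real (Arg (z$i)))) powi (\<alpha> i))"
    unfolding mono_def
  proof (rule prod.cong[OF refl])
    fix i
    have "complex_of_real (norm (z$i)) * exp (\<i> * complex_of_real (Arg (z$i))) = z$i"
      by (cases "z$i = 0") (use Arg_eq[of "z$i"] in auto)
    then show "(z$i) powi (\<alpha> i) = (complex_of_real (norm (z$i)) * exp (\<i> * complex_of_real (Arg (z$i)))) powi (\<alpha> i)"
      by simp
  qed
  also have "\<dots> = complex_of_real (\<Prod>i\<in>UNIV. norm (z$i) powi (\<alpha> i)) * (\<Prod>i\<in>UNIV. exp (\<i> * complex_of_real (Arg (z$i))) powi (\<alpha> i))"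
    by (simp add: power_int_mult_distrib prod.distrib)
  finally show ?thesis using e1 by simp
qed

theorem lemma3p9:
  fixes \<Omega> :: "(complex^'n) set" and \<omega> :: "complex^'n \<Rightarrow> real"
    and uh :: "('n \<Rightarrow> int) \<Rightarrow> complex" and g :: "complex^'n \<Rightarrow> complex"
  assumes "bounded \<Omega>" and "connected \<Omega>" and "reinhardt \<Omega>"
    and "multi_radial_weight \<Omega> \<omega>" and "admissible_weight \<Omega> \<omega>"
    and "feasible \<Omega> \<omega>"
    and "periodic_distribution_coeffs uh"
    and "\<exists>M. \<forall>\<alpha>\<in>Lambda \<Omega> \<omega>. norm (uh \<alpha>) \<le> M"
    and "induced_by \<Omega> \<omega> g uh"
  shows "analytic_several g \<Omega>"
proof -
  note R = assms(3) and fe = assms(6) and ind = assms(9)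
  obtain M where M: "\<And>\<alpha>. \<alpha> \<in> Lambda \<Omega> \<omega> \<Longrightarrow> norm (uh \<alpha>) \<le> M" using assms(8) by blast
  obtain F where Fs: "\<And>z. z\<in>\<Omega> \<Longrightarrow> ((\<lambda>\<alpha>. complex_of_real (ccoef_sq \<Omega> \<omega> \<alpha>) * mono z \<alpha>) has_sum F z) (Lambda \<Omega> \<omega>)"
    using fe unfolding feasible_def by blast
  define S where "S = {\<alpha> \<in> Lambda \<Omega> \<omega>. ccoef_sq \<Omega> \<omega> \<alpha> \<noteq> 0}"
  define cf where "cf = ccoef_sq \<Omega> \<omega>"
  define a where "a = (\<lambda>\<alpha>. complex_of_real (cf \<alpha>) * uh \<alpha>)"
  have SL: "S \<subseteq> Lambda \<Omega> \<omega>" by (auto simp: S_def)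
  have cf0: "cf \<alpha> \<ge> 0" for \<alpha> by (simp add: cf_def ccoef_nonneg)
  have Snn: "\<alpha> j \<ge> 0" if "\<alpha> \<in> S" "z0 \<in> \<Omega>" "z0$j = 0" for \<alpha> z0 j
    using no_neg_exp[OF R fe, of \<alpha> z0 j] that by (auto simp: S_def)
  have na: "norm (a \<alpha>) \<le> M * cf \<alpha>" if "\<alpha> \<in> S" for \<alpha>
  proof -
    have u: "norm (uh \<alpha>) \<le> M" using M[of \<alpha>] that SL by auto
    have "cf \<alpha> * norm (uh \<alpha>) \<le> cf \<alpha> * M" using u cf0[of \<alpha>] by (rule mult_left_mono)
    then show ?thesis by (simp add: a_def norm_mult mult.commute abs_of_nonneg[OF cf0])
  qed
  have gexp: "((\<lambda>\<alpha>. a \<alpha> * mono z \<alpha>) has_sum g z) S" if z: "z \<in> \<Omega>" for z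
  proof -
    define r :: "real^'n" where "r = (\<chi> i. norm (z$i))"
    define \<theta> :: "real^'n" where "\<theta> = (\<chi> i. Arg (z$i))"
    have rs: "r \<in> shadow \<Omega>" using z by (auto simp: shadow_def r_def)
    have "((\<lambda>\<alpha>. complex_of_real (ccoef_sq \<Omega> \<omega> \<alpha>) * complex_of_real (\<Prod>i\<in>UNIV. (r$i) powi (\<alpha> i))
              * uh \<alpha> * exp (\<i> * complex_of_real (\<Sum>i\<in>UNIV. real_of_int (\<alpha> i) * \<theta>$i)))
          has_sum g (\<chi> i. complex_of_real (r$i) * exp (\<i> * complex_of_real (\<theta>$i)))) (Lambda \<Omega> \<omega>)"
      using ind rs unfolding induced_by_def by blast
    then have "((\<lambda>\<alpha>. a \<alpha> * mono z \<alpha>) has_sum g z) (Lambda \<Omega> \<omega>)"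
      unfolding r_def \<theta>_def term_eq polar_vec by (simp add: a_def cf_def)
    then show ?thesis
      by (rule has_sum_cong_neutral[THEN iffD1, rotated -1]) (auto simp: S_def a_def cf_def)
  qed
  show ?thesis
    unfolding analytic_several_def
  proof (intro ballI)
    fix z0 assume z0: "z0 \<in> \<Omega>"
    have opn: "open \<Omega>" using R by (simp add: reinhardt_def)
    define p :: "complex^'n" where "p = (\<chi> j. of_real (norm (z0$j)))"
    have pO: "p \<in> \<Omega>" by (rule reinhardt_mod[OF R z0]) (simp add: p_def)
    obtain \<epsilon> where eps: "\<epsilon> > 0" "ball p \<epsilon> \<subseteq> \<Omega>" using opn pO open_contains_ball by blast
    obtain \<epsilon>0 where eps0: "\<epsilon>0 > 0" "ball z0 \<epsilon>0 \<subseteq> \<Omega>" using opn z0 open_contains_ball by blast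
    define m0 where "m0 = Min (insert 1 {norm (z0$j) | j. z0$j \<noteq> 0})"
    have fin: "finite {norm (z0$j) | j. z0$j \<noteq> 0}" by simp
    have m0: "m0 > 0" unfolding m0_def using fin by (subst Min_gr_iff) auto
    have m0le: "m0 \<le> norm (z0$j)" if "z0$j \<noteq> 0" for j
      unfolding m0_def using fin that by (intro Min_le) auto
    define \<delta> where "\<delta> = min (\<epsilon> / (2 * real CARD('n))) (m0 / 2)"
    have d0: "\<delta> > 0" using eps m0 by (simp add: \<delta>_def)
    have dC: "real CARD('n) * \<delta> < \<epsilon>"
    proof -
      have "real CARD('n) * \<delta> \<le> real CARD('n) * (\<epsilon> / (2 * real CARD('n)))"
        by (intro mult_left_mono) (auto simp: \<delta>_def)
      also have "\<dots> = \<epsilon> / 2" by simp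
      finally show ?thesis using eps by simp
    qed
    have dz: "\<delta> < norm (z0$j)" if "z0$j \<noteq> 0" for j
      using m0le[OF that] m0 by (simp add: \<delta>_def)
    define e where "e = min \<delta> \<epsilon>0"
    define Tp where "Tp = (\<lambda>j. if z0$j = 0 then \<delta> else norm (z0$j) + \<delta>)"
    define Tm where "Tm = (\<lambda>j. if z0$j = 0 then \<delta> else norm (z0$j) - \<delta>)"
    have Tpos: "Tp j > 0" "Tm j > 0" for j using d0 dz[of j] by (auto simp: Tp_def Tm_def add_nonneg_pos)
    define cb where "cb = (\<lambda>\<beta>. infsum (\<lambda>\<alpha>. a \<alpha> * (\<Prod>j\<in>UNIV. ecoef (z0$j) (\<alpha> j) (\<beta> j))) S)"
    define G where "G = (\<lambda>\<alpha>. M * (\<Sum>X\<in>Pow (UNIV::'n set). cf \<alpha> * ((\<Prod>j\<in>X. Tp j powi \<alpha> j) * (\<Prod>j\<in>UNIV-X. Tm j powi \<alpha> j))))"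
    have Gs: "G summable_on S"
    proof -
      have "(\<lambda>\<alpha>. cf \<alpha> * ((\<Prod>j\<in>X. Tp j powi \<alpha> j) * (\<Prod>j\<in>UNIV-X. Tm j powi \<alpha> j))) summable_on S" for X
      proof -
        define w :: "complex^'n" where "w = (\<chi> j. of_real (if j \<in> X then Tp j else Tm j))"
        have wd: "norm (w$j - p$j) \<le> \<delta>" for j
          using d0 by (auto simp: w_def p_def Tp_def Tm_def)
        have wO: "w \<in> \<Omega>" using eps(2) in_ball_coord[OF wd dC] by blast
        have "(\<lambda>\<alpha>. complex_of_real (ccoef_sq \<Omega> \<omega> \<alpha>) * mono w \<alpha>) summable_on Lambda \<Omega> \<omega>"
          using Fs[OF wO] by (rule has_sum_imp_summable)
        then have "(\<lambda>\<alpha>. norm (complex_of_real (ccoef_sq \<Omega> \<omega> \<alpha>) * mono w \<alpha>)) summable_on Lambda \<Omega> \<omega>"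
          by (simp add: summable_on_iff_abs_summable_on_complex)
        then have s1: "(\<lambda>\<alpha>. norm (complex_of_real (ccoef_sq \<Omega> \<omega> \<alpha>) * mono w \<alpha>)) summable_on S"
          using SL by (rule summable_on_subset_banach)
        have "norm (complex_of_real (ccoef_sq \<Omega> \<omega> \<alpha>) * mono w \<alpha>)
              = cf \<alpha> * ((\<Prod>j\<in>X. Tp j powi \<alpha> j) * (\<Prod>j\<in>UNIV-X. Tm j powi \<alpha> j))" for \<alpha>
        proof -
          have "(\<Prod>j\<in>UNIV. (if j \<in> X then Tp j else Tm j) powi \<alpha> j)
                = (\<Prod>j\<in>X. Tp j powi \<alpha> j) * (\<Prod>j\<in>UNIV-X. Tm j powi \<alpha> j)"
          proof -
            have "(\<Prod>j\<in>UNIV. (if j \<in> X then Tp j else Tm j) powi \<alpha> j)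
                = (\<Prod>j\<in>UNIV. if j \<in> X then Tp j powi \<alpha> j else Tm j powi \<alpha> j)"
              by (rule prod.cong) auto
            also have "\<dots> = prod (\<lambda>j. Tp j powi \<alpha> j) (UNIV \<inter> {j. j \<in> X}) * prod (\<lambda>j. Tm j powi \<alpha> j) (UNIV \<inter> - {j. j \<in> X})"
              by (rule prod.If_cases) simp
            also have "\<dots> = (\<Prod>j\<in>X. Tp j powi \<alpha> j) * (\<Prod>j\<in>UNIV-X. Tm j powi \<alpha> j)"
              by (simp add: Diff_eq)
            finally show ?thesis .
          qed
          moreover have "(\<Prod>j\<in>UNIV. (if j \<in> X then Tp j else Tm j) powi \<alpha> j) \<ge> 0"
            using Tpos by (intro prod_nonneg) (simp add: less_imp_le)
          moreover have "mono w \<alpha> = of_real (\<Prod>j\<in>UNIV. (if j \<in> X then Tp j else Tm j) powi \<alpha> j)"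
            unfolding w_def by (rule mono_real)
          ultimately show ?thesis using cf0[of \<alpha>]
            by (simp only: norm_mult norm_of_real cf_def abs_of_nonneg)
        qed
        with s1 show ?thesis by simp
      qed
      then show ?thesis unfolding G_def
        by (intro summable_on_cmult_right summable_on_sum_finite) auto
    qed
    show "\<exists>e>0. ball z0 e \<subseteq> \<Omega> \<and> (\<exists>c. \<forall>z\<in>ball z0 e.
            ((\<lambda>\<beta>. c \<beta> * (\<Prod>i\<in>UNIV. (z$i - z0$i) ^ (\<beta> i))) has_sum g z) UNIV)"
    proof (intro exI conjI allI ballI)
      show "e > 0" using d0 eps0 by (simp add: e_def)
      show "ball z0 e \<subseteq> \<Omega>" using eps0 by (auto simp: e_def)
      fix z assume zb: "z \<in> ball z0 e"
      have zO: "z \<in> \<Omega>" using zb eps0 by (auto simp: e_def)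
      define h where "h = z - z0"
      have hd: "norm (h$j) < \<delta>" for j
      proof -
        have "norm (h$j) \<le> norm h" by (rule Finite_Cartesian_Product.norm_nth_le)
        also have "norm h = dist z z0" by (simp add: h_def dist_norm)
        also have "\<dots> < \<delta>" using zb by (simp add: e_def dist_commute)
        finally show ?thesis .
      qed
      have cond: "z0$j \<noteq> 0 \<and> norm (h$j) < norm (z0$j) \<or> z0$j = 0 \<and> \<alpha> j \<ge> 0" if "\<alpha> \<in> S" for \<alpha> j
        using hd[of j] dz[of j] Snn[OF that z0, of j] by force
      define f where "f = (\<lambda>(\<alpha>, \<beta>). a \<alpha> * (\<Prod>j\<in>UNIV. ecoef (z0$j) (\<alpha> j) (\<beta> j) * (h$j) ^ (\<beta> j)))"
      have zh: "z0$j + h$j = z$j" for j by (simp add: h_def)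
      have row: "((\<lambda>\<beta>. f (\<alpha>, \<beta>)) has_sum a \<alpha> * mono z \<alpha>) UNIV" if "\<alpha> \<in> S" for \<alpha>
      proof -
        have "((\<lambda>\<beta>. \<Prod>j\<in>UNIV. ecoef (z0$j) (\<alpha> j) (\<beta> j) * (h$j) ^ (\<beta> j)) has_sum (\<Prod>j\<in>UNIV. (z0$j + h$j) powi \<alpha> j)) UNIV"
          by (rule has_sum_prod_UNIV) (use coord_sum[OF cond[OF that]] has_sum_imp_summable in blast)+
        then show ?thesis unfolding zh mono_def f_def by (simp add: has_sum_cmult_right)
      qed
      have rown: "((\<lambda>\<beta>. norm (f (\<alpha>, \<beta>))) has_sum norm (a \<alpha>) * (\<Prod>j\<in>UNIV. Ecoef (z0$j) (h$j) (\<alpha> j))) UNIV"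
        if "\<alpha> \<in> S" for \<alpha>
      proof -
        have "((\<lambda>\<beta>. \<Prod>j\<in>UNIV. norm (ecoef (z0$j) (\<alpha> j) (\<beta> j) * (h$j) ^ (\<beta> j))) has_sum (\<Prod>j\<in>UNIV. Ecoef (z0$j) (h$j) (\<alpha> j))) UNIV"
        proof (rule has_sum_prod_UNIV)
          fix j
          show "((\<lambda>k. norm (ecoef (z0$j) (\<alpha> j) k * (h$j) ^ k)) has_sum Ecoef (z0$j) (h$j) (\<alpha> j)) UNIV"
            by (rule coord_sum(2)[OF cond[OF that]])
          then show "(\<lambda>k. norm (norm (ecoef (z0$j) (\<alpha> j) k * (h$j) ^ k))) summable_on UNIV"
            by (simp add: has_sum_imp_summable)
        qed
        then show ?thesis unfolding f_def by (simp add: norm_mult prod_norm[symmetric] has_sum_cmult_right)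
      qed
      have Enn: "Ecoef (z0$j) (h$j) (\<alpha> j) \<ge> 0" if "\<alpha> \<in> S" for \<alpha> j
        using has_sum_nonneg[OF coord_sum(2)[OF cond[OF that]]] by simp
      have rowb: "norm (a \<alpha>) * (\<Prod>j\<in>UNIV. Ecoef (z0$j) (h$j) (\<alpha> j)) \<le> G \<alpha>" if "\<alpha> \<in> S" for \<alpha>
      proof -
        have le1: "(\<Prod>j\<in>UNIV. Ecoef (z0$j) (h$j) (\<alpha> j)) \<le> (\<Prod>j\<in>UNIV. Tp j powi \<alpha> j + Tm j powi \<alpha> j)"
        proof (rule prod_mono, intro conjI)
          fix j :: 'n
          show "0 \<le> Ecoef (z0$j) (h$j) (\<alpha> j)" by (rule Enn[OF that])
          have "z0$j \<noteq> 0 \<and> norm (h$j) \<le> \<delta> \<and> \<delta> < norm (z0$j) \<or> z0$j = 0 \<and> \<alpha> j \<ge> 0 \<and> norm (h$j) \<le> \<delta>"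
            using hd[of j] dz[of j] Snn[OF that z0, of j] by force
          then show "Ecoef (z0$j) (h$j) (\<alpha> j) \<le> Tp j powi \<alpha> j + Tm j powi \<alpha> j"
            unfolding Tp_def Tm_def by (rule Ecoef_bound)
        qed
        have eqn: "(\<Prod>j\<in>UNIV. Tp j powi \<alpha> j + Tm j powi \<alpha> j)
            = (\<Sum>X\<in>Pow (UNIV::'n set). (\<Prod>j\<in>X. Tp j powi \<alpha> j) * (\<Prod>j\<in>UNIV-X. Tm j powi \<alpha> j))"
          by (rule prod_add) simp
        have nn: "0 \<le> (\<Prod>j\<in>UNIV. Ecoef (z0$j) (h$j) (\<alpha> j))" using Enn[OF that] by (simp add: prod_nonneg)
        have "norm (a \<alpha>) * (\<Prod>j\<in>UNIV. Ecoef (z0$j) (h$j) (\<alpha> j))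
            \<le> (M * cf \<alpha>) * (\<Sum>X\<in>Pow (UNIV::'n set). (\<Prod>j\<in>X. Tp j powi \<alpha> j) * (\<Prod>j\<in>UNIV-X. Tm j powi \<alpha> j))"
        proof (rule mult_mono)
          show "0 \<le> M * cf \<alpha>" using na[OF that] norm_ge_zero[of "a \<alpha>"] by linarith
        qed (use na[OF that] nn le1 eqn in auto)
        also have "\<dots> = G \<alpha>" by (simp add: G_def sum_distrib_left mult_ac)
        finally show ?thesis .
      qed
      have fns: "(\<lambda>p. norm (f p)) summable_on Sigma S (\<lambda>_. UNIV)"
      proof (rule summable_on_SigmaI[where g = "\<lambda>\<alpha>. norm (a \<alpha>) * (\<Prod>j\<in>UNIV. Ecoef (z0$j) (h$j) (\<alpha> j))"])
        show "((\<lambda>\<beta>. norm (f (\<alpha>, \<beta>))) has_sum norm (a \<alpha>) * (\<Prod>j\<in>UNIV. Ecoef (z0$j) (h$j) (\<alpha> j))) UNIV"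
          if "\<alpha> \<in> S" for \<alpha> using rown[OF that] .
        show "(\<lambda>\<alpha>. norm (a \<alpha>) * (\<Prod>j\<in>UNIV. Ecoef (z0$j) (h$j) (\<alpha> j))) summable_on S"
          by (rule summable_on_comparison_test[OF Gs rowb]) (use Enn in \<open>auto simp: prod_nonneg\<close>)
      qed auto
      have fs: "f summable_on Sigma S (\<lambda>_. UNIV)" using abs_summable_summable[OF fns] .
      have fhs: "(f has_sum g z) (S \<times> UNIV)"
        by (rule has_sum_SigmaI[OF row gexp[OF zO] fs])
      have fhs': "((\<lambda>(\<beta>, \<alpha>). f (\<alpha>, \<beta>)) has_sum g z) (UNIV \<times> S)"
        using fhs has_sum_swap by blast
      have col: "((\<lambda>\<alpha>. f (\<alpha>, \<beta>)) has_sum cb \<beta> * (\<Prod>i\<in>UNIV. (z$i - z0$i) ^ (\<beta> i))) S" for \<beta>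
      proof -
        define H where "H = (\<Prod>i\<in>UNIV. (z$i - z0$i) ^ (\<beta> i))"
        define X where "X = (\<lambda>\<alpha>. a \<alpha> * (\<Prod>j\<in>UNIV. ecoef (z0$j) (\<alpha> j) (\<beta> j)))"
        have fX: "f (\<alpha>, \<beta>) = X \<alpha> * H" for \<alpha>
          by (simp add: f_def X_def H_def h_def prod.distrib mult_ac)
        have cs: "(\<lambda>\<alpha>. f (\<alpha>, \<beta>)) summable_on S"
        proof -
          have "(\<lambda>(x, y). f (y, x)) summable_on Sigma UNIV (\<lambda>_. S)"
            using has_sum_imp_summable[OF fhs'] by simp
          from summable_on_SigmaD1[of "\<lambda>x y. f (y, x)", OF this] show ?thesis by simp
        qed
        show ?thesis
        proof (cases "H = 0")
          case True
          then show ?thesis by (simp add: fX H_def[symmetric])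
        next
          case False
          have "X summable_on S" using cs unfolding fX using summable_on_cmult_left'[OF False] by blast
          then have "((\<lambda>\<alpha>. X \<alpha> * H) has_sum cb \<beta> * H) S"
            unfolding cb_def X_def[symmetric] by (intro has_sum_cmult_left has_sum_infsum)
          then show ?thesis unfolding fX H_def .
        qed
      qed
      show "((\<lambda>\<beta>. cb \<beta> * (\<Prod>i\<in>UNIV. (z$i - z0$i) ^ (\<beta> i))) has_sum g z) UNIV"
        by (rule has_sum_Sigma'[OF fhs']) (use col in simp)
    qed
  qed
qed

end
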